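(* Let $S$ be a Hausdorff pseudocompact semitopological semigroup which is an orthogonal sum $S=\sum_{i\in\mathscr I}B^0_{\lambda_i}(S_i)$ of topological Brandt $\lambda_i^0$-extensions of semitopological monoids $S_i$ with zeros. Then (i) for every $i\in\mathscr I$ the subspace $B^0_{\lambda_i}(S_i)$ is pseudocompact; (ii) for all $i\in\mathscr I$ and $\alpha_i,\beta_i\in\lambda_i$ the subspace $(S_i)_{\alpha_i,\beta_i}$ is pseudocompact.
   Context: All spaces are Hausdorff; a semitopological semigroup is a Hausdorff space with separately continuous associative operation; a space is pseudocompact if every locally finite family of non-empty open sets is finite. For a semigroup $T$ with zero $0_T$ and a cardinal $\lambda\ge1$, $B^0_\lambda(T)=(\lambda\times (T\setminus\{0_T\})\times\lambda)\cup\{0\}$ with $(\alpha,a,\beta)(\gamma,b,\delta)=(\alpha,ab,\delta)$ if $\beta=\gamma$ and $ab\ne0_T$, and $0$ otherwise, $0$ a zero. For $A\subseteq T$, $A_{\alpha,\beta}=\{(\alpha,s,\beta):s\in A\setminus\{0_T\}\}\cup\{0\}$ if $0_T\in A$ and $\{(\alpha,s,\beta):s\in A\}$ otherwise. A topological Brandt $\lambda^0$-extension of a semitopological monoid $T$ with zero is $B^0_\lambda(T)$ with a topology making it a semitopological semigroup such that for some $\alpha\in\lambda$ the map $s\mapsto(\alpha,s,\alpha)$ ($0_T\mapsto0$) is a homeomorphism $T\to T_{\alpha,\alpha}$. The orthogonal sum of semigroups $T_\iota$ with zeros is $\{0\}\cup\bigcup_\iota(T_\iota\setminus\{0_\iota\})$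 with products computed in $T_\iota$ when both factors lie in the same $T_\iota$ and the product is non-zero, and $0$ otherwise. *)

theory Defs
  imports "HOL-Analysis.Analysis"
begin

definition pseudocompact_space :: "'a topology \<Rightarrow> bool" where
  "pseudocompact_space X \<longleftrightarrow>
     (\<forall>\<U>. (\<forall>U\<in>\<U>. openin X U \<and> U \<noteq> {}) \<and> locally_finite_in X \<U> \<longrightarrow> finite \<U>)"

definition semitop_semigroup :: "'a topology \<Rightarrow> 'a set \<Rightarrow> ('a \<Rightarrow> 'a \<Rightarrow> 'a) \<Rightarrow> bool" where
  "semitop_semigroup X C m \<longleftrightarrow>
     topspace X = C \<and> Hausdorff_space X \<and>
     (\<forall>x\<in>C. \<forall>y\<in>C. m x y \<in> C) \<and>
     (\<forall>x\<in>C. \<forall>y\<in>C. \<forall>w\<in>C. m (m x y) w = m x (m y w)) \<and>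
     (\<forall>x\<in>C. continuous_map X X (m x) \<and> continuous_map X X (\<lambda>y. m y x))"

definition semitop_monoid_zero ::
  "'s topology \<Rightarrow> 's set \<Rightarrow> ('s \<Rightarrow> 's \<Rightarrow> 's) \<Rightarrow> 's \<Rightarrow> 's \<Rightarrow> bool" where
  "semitop_monoid_zero X T m e z \<longleftrightarrow>
     semitop_semigroup X T m \<and>
     e \<in> T \<and> (\<forall>x\<in>T. m e x = x \<and> m x e = x) \<and>
     z \<in> T \<and> (\<forall>x\<in>T. m z x = z \<and> m x z = z)"

text \<open>Elements of the orthogonal sum of Brandt extensions:
  the common zero, and triples (alpha, s, beta) tagged with the summand index i.\<close>
datatype ('i, 'c, 's) osum = OZero | OEl 'i 'c 's 'c

definition osum_carrier ::
  "'i set \<Rightarrow> ('i \<Rightarrow> 'c set) \<Rightarrow> ('i \<Rightarrow> 's set) \<Rightarrow> ('i \<Rightarrow> 's) \<Rightarrow> ('i, 'c, 's) osum set" where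
  "osum_carrier I \<Lambda> T z = insert OZero
     {OEl i a s b | i a s b. i \<in> I \<and> a \<in> \<Lambda> i \<and> b \<in> \<Lambda> i \<and> s \<in> T i \<and> s \<noteq> z i}"

definition osum_mult ::
  "('i \<Rightarrow> 's \<Rightarrow> 's \<Rightarrow> 's) \<Rightarrow> ('i \<Rightarrow> 's) \<Rightarrow> ('i, 'c, 's) osum \<Rightarrow> ('i, 'c, 's) osum \<Rightarrow> ('i, 'c, 's) osum" where
  "osum_mult m z x y =
     (case x of
        OZero \<Rightarrow> OZero
      | OEl i a s b \<Rightarrow>
          (case y of
             OZero \<Rightarrow> OZero
           | OEl j c t d \<Rightarrow>
               (if i = j \<and> b = c \<and> m i s t \<noteq> z i then OEl i a (m i s t) d else OZero)))"

definition brandt_part ::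
  "('i \<Rightarrow> 'c set) \<Rightarrow> ('i \<Rightarrow> 's set) \<Rightarrow> ('i \<Rightarrow> 's) \<Rightarrow> 'i \<Rightarrow> ('i, 'c, 's) osum set" where
  "brandt_part \<Lambda> T z i = insert OZero
     {OEl i a s b | a s b. a \<in> \<Lambda> i \<and> b \<in> \<Lambda> i \<and> s \<in> T i \<and> s \<noteq> z i}"

text \<open>(T i)_{a,b} (note 0_{T i} is in T i, so the zero is included).\<close>
definition brandt_block ::
  "('i \<Rightarrow> 's set) \<Rightarrow> ('i \<Rightarrow> 's) \<Rightarrow> 'i \<Rightarrow> 'c \<Rightarrow> 'c \<Rightarrow> ('i, 'c, 's) osum set" where
  "brandt_block T z i a b = insert OZero {OEl i a s b | s. s \<in> T i \<and> s \<noteq> z i}"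

definition brandt_embed :: "('i \<Rightarrow> 's) \<Rightarrow> 'i \<Rightarrow> 'c \<Rightarrow> 's \<Rightarrow> ('i, 'c, 's) osum" where
  "brandt_embed z i a s = (if s = z i then OZero else OEl i a s a)"

definition topological_brandt_ext ::
  "('i, 'c, 's) osum topology \<Rightarrow> ('i \<Rightarrow> 'c set) \<Rightarrow> ('i \<Rightarrow> 's set) \<Rightarrow>
   ('i \<Rightarrow> 's \<Rightarrow> 's \<Rightarrow> 's) \<Rightarrow> ('i \<Rightarrow> 's) \<Rightarrow> ('i \<Rightarrow> 's topology) \<Rightarrow> 'i \<Rightarrow> bool" where
  "topological_brandt_ext \<tau> \<Lambda> T m z \<sigma> i \<longleftrightarrow>
     \<Lambda> i \<noteq> {} \<and>
     semitop_semigroup (subtopology \<tau> (brandt_part \<Lambda> T z i)) (brandt_part \<Lambda> T z i) (osum_mult m z) \<and>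
     (\<exists>a\<in>\<Lambda> i. homeomorphic_map (\<sigma> i) (subtopology \<tau> (brandt_block T z i a a)) (brandt_embed z i a))"

end

theory Submission
  imports Defs
begin

lemma pc_sub:
  assumes pc: "pseudocompact_space X" and pY: "p \<in> Y" and Ysub: "Y \<subseteq> topspace X"
    and op: "openin X (Y - {p})"
    and out: "\<forall>x \<in> topspace X - Y. \<exists>W. openin X W \<and> x \<in> W \<and> W \<inter> (Y - {p}) = {}"
  shows "pseudocompact_space (subtopology X Y)"
  unfolding pseudocompact_space_def
proof (intro allI impI, elim conjE)
  fix \<U> assume H: "\<forall>U\<in>\<U>. openin (subtopology X Y) U \<and> U \<noteq> {}"
    and lf: "locally_finite_in (subtopology X Y) \<U>"
  have sub: "\<And>U. U \<in> \<U> \<Longrightarrow> U \<subseteq> Y"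
    using H openin_subset by fastforce
  have "p \<in> topspace (subtopology X Y)" using pY Ysub by auto
  then obtain V where V: "p \<in> V" "finite {U\<in>\<U>. U \<inter> V \<noteq> {}}"
    using lf unfolding locally_finite_in_def by blast
  have fin1: "finite {U\<in>\<U>. p \<in> U}"
    by (rule finite_subset[OF _ V(2)]) (use V(1) in blast)
  define \<U>' where "\<U>' = {U\<in>\<U>. p \<notin> U}"
  have op': "\<forall>U\<in>\<U>'. openin X U \<and> U \<noteq> {}"
  proof
    fix U assume U: "U \<in> \<U>'"
    have U1: "U \<in> \<U>" "p \<notin> U" using U unfolding \<U>'_def by auto
    have "openin (subtopology X Y) U" using H U1 by blast
    then obtain T where T: "openin X T" "U = T \<inter> Y" by (auto simp: openin_subtopology)
    have "U = T \<inter> (Y - {p})" using T U1 by blast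
    then have "openin X U" using T(1) op by (metis openin_Int)
    then show "openin X U \<and> U \<noteq> {}" using H U1 by blast
  qed
  have lf': "locally_finite_in X \<U>'"
    unfolding locally_finite_in_def
  proof
    show "\<Union> \<U>' \<subseteq> topspace X" using op' openin_subset by blast
    show "\<forall>x\<in>topspace X. \<exists>V. openin X V \<and> x \<in> V \<and> finite {U \<in> \<U>'. U \<inter> V \<noteq> {}}"
    proof
      fix x assume x: "x \<in> topspace X"
      show "\<exists>V. openin X V \<and> x \<in> V \<and> finite {U \<in> \<U>'. U \<inter> V \<noteq> {}}"
      proof (cases "x \<in> Y")
        case True
        then have "x \<in> topspace (subtopology X Y)" using x by auto
        then obtain V where V: "openin (subtopology X Y) V" "x \<in> V" "finite {U\<in>\<U>. U \<inter> V \<noteq> {}}"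
          using lf unfolding locally_finite_in_def by blast
        then obtain T where T: "openin X T" "V = T \<inter> Y" by (auto simp: openin_subtopology)
        have "{U \<in> \<U>'. U \<inter> T \<noteq> {}} \<subseteq> {U\<in>\<U>. U \<inter> V \<noteq> {}}"
          using sub T(2) unfolding \<U>'_def by blast
        then show ?thesis using T V finite_subset by blast
      next
        case False
        then obtain W where W: "openin X W" "x \<in> W" "W \<inter> (Y - {p}) = {}" using out x by blast
        have "{U \<in> \<U>'. U \<inter> W \<noteq> {}} = {}" using W(3) sub unfolding \<U>'_def by blast
        then show ?thesis using W by (metis finite.emptyI)
      qed
    qed
  qed
  have "finite \<U>'" using pc op' lf' unfolding pseudocompact_space_def by blast
  moreover have "\<U> = \<U>' \<union> {U\<in>\<U>. p \<in> U}" unfolding \<U>'_def by blast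
  ultimately show "finite \<U>" using fin1 by (metis finite_Un)
qed


lemma block_open:
  assumes monoids: "\<forall>i\<in>I. semitop_monoid_zero (\<sigma> i) (T i) (m i) (e i) (z i)"
    and semitop: "semitop_semigroup \<tau> (osum_carrier I \<Lambda> T z) (osum_mult m z)"
    and j: "j \<in> I" and g: "g \<in> \<Lambda> j" and d: "d \<in> \<Lambda> j" and t: "t \<in> T j" "t \<noteq> z j"
  shows "openin \<tau> (brandt_block T z j g d - {OZero})"
proof -
  have M: "semitop_monoid_zero (\<sigma> j) (T j) (m j) (e j) (z j)" using monoids j by blast
  hence eT: "e j \<in> T j" and el: "\<And>x. x \<in> T j \<Longrightarrow> m j (e j) x = x \<and> m j x (e j) = x"
    and zl: "\<And>x. x \<in> T j \<Longrightarrow> m j (z j) x = z j"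
    unfolding semitop_monoid_zero_def by auto
  have ez: "e j \<noteq> z j"
  proof
    assume "e j = z j"
    hence "t = z j" using el[OF t(1)] zl[OF t(1)] by simp
    thus False using t(2) by simp
  qed
  define E where "E = OEl j g (e j) g"
  define F where "F = OEl j d (e j) d"
  have ts: "topspace \<tau> = osum_carrier I \<Lambda> T z" using semitop unfolding semitop_semigroup_def by blast
  have ET: "E \<in> topspace \<tau>" "F \<in> topspace \<tau>" unfolding ts E_def F_def osum_carrier_def
    using j g d eT ez by auto
  have cE: "continuous_map \<tau> \<tau> (osum_mult m z E)" and cF: "continuous_map \<tau> \<tau> (\<lambda>y. osum_mult m z y F)"
  proof -
    have "\<forall>x\<in>osum_carrier I \<Lambda> T z. continuous_map \<tau> \<tau> (osum_mult m z x) \<and> continuous_map \<tau> \<tau> (\<lambda>y. osum_mult m z y x)"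
      using semitop unfolding semitop_semigroup_def by blast
    then show "continuous_map \<tau> \<tau> (osum_mult m z E)" "continuous_map \<tau> \<tau> (\<lambda>y. osum_mult m z y F)"
      using ET ts by auto
  qed
  define f where "f = (\<lambda>y. osum_mult m z y F) \<circ> osum_mult m z E"
  have cf: "continuous_map \<tau> \<tau> f" unfolding f_def using cE cF continuous_map_compose by blast
  have "t1_space \<tau>" using semitop Hausdorff_imp_t1_space unfolding semitop_semigroup_def by blast
  moreover have "OZero \<in> topspace \<tau>" using ts unfolding osum_carrier_def by simp
  ultimately have "closedin \<tau> {OZero}" by (rule closedin_t1_singleton)
  hence oo: "openin \<tau> (topspace \<tau> - {OZero})" by (rule openin_diff[OF openin_topspace])
  have "{y \<in> topspace \<tau>. f y \<in> topspace \<tau> - {OZero}} = brandt_block T z j g d - {OZero}"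
  proof (intro set_eqI iffI)
    fix y assume y: "y \<in> {y \<in> topspace \<tau>. f y \<in> topspace \<tau> - {OZero}}"
    then have yc: "y \<in> osum_carrier I \<Lambda> T z" and fy: "f y \<noteq> OZero" using ts by auto
    show "y \<in> brandt_block T z j g d - {OZero}"
    proof (cases y)
      case OZero
      then show ?thesis using fy by (simp add: f_def osum_mult_def E_def F_def)
    next
      case (OEl k a s b)
      show ?thesis
      proof (cases "k = j \<and> a = g \<and> b = d")
        case True
        then show ?thesis using yc OEl unfolding brandt_block_def osum_carrier_def by auto
      next
        case False
        then show ?thesis using fy OEl by (auto simp: f_def osum_mult_def E_def F_def split: if_splits)
      qed
    qed
  next
    fix y assume y: "y \<in> brandt_block T z j g d - {OZero}"
    then obtain s where s: "y = OEl j g s d" "s \<in> T j" "s \<noteq> z j" unfolding brandt_block_def by auto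
    have "y \<in> topspace \<tau>" using s j g d unfolding ts osum_carrier_def by auto
    moreover have "f y = y" using s el[OF s(2)] by (simp add: f_def osum_mult_def E_def F_def)
    ultimately show "y \<in> {y \<in> topspace \<tau>. f y \<in> topspace \<tau> - {OZero}}" using s by auto
  qed
  then show ?thesis using openin_continuous_map_preimage[OF cf oo] by simp
qed

theorem proposition2p6:
  fixes I :: "'i set" and \<Lambda> :: "'i \<Rightarrow> 'c set" and T :: "'i \<Rightarrow> 's set"
    and m :: "'i \<Rightarrow> 's \<Rightarrow> 's \<Rightarrow> 's" and e z :: "'i \<Rightarrow> 's"
    and \<sigma> :: "'i \<Rightarrow> 's topology" and \<tau> :: "('i, 'c, 's) osum topology"
  assumes monoids: "\<forall>i\<in>I. semitop_monoid_zero (\<sigma> i) (T i) (m i) (e i) (z i)"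
    and semitop: "semitop_semigroup \<tau> (osum_carrier I \<Lambda> T z) (osum_mult m z)"
    and pseudo: "pseudocompact_space \<tau>"
    and brandt: "\<forall>i\<in>I. topological_brandt_ext \<tau> \<Lambda> T m z \<sigma> i"
  shows "(\<forall>i\<in>I. pseudocompact_space (subtopology \<tau> (brandt_part \<Lambda> T z i))) \<and>
         (\<forall>i\<in>I. \<forall>a\<in>\<Lambda> i. \<forall>b\<in>\<Lambda> i.
            pseudocompact_space (subtopology \<tau> (brandt_block T z i a b)))"
proof -
  have ts: "topspace \<tau> = osum_carrier I \<Lambda> T z" using semitop unfolding semitop_semigroup_def by blast
  have bo: "\<And>j g d t. j \<in> I \<Longrightarrow> g \<in> \<Lambda> j \<Longrightarrow> d \<in> \<Lambda> j \<Longrightarrow> t \<in> T j \<Longrightarrow> t \<noteq> z j \<Longrightarrow>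
      openin \<tau> (brandt_block T z j g d - {OZero})"
    using block_open[OF monoids semitop] by blast
  have mem: "\<And>x. x \<in> topspace \<tau> \<Longrightarrow> x \<noteq> OZero \<Longrightarrow> \<exists>j g s d. x = OEl j g s d \<and> j \<in> I \<and> g \<in> \<Lambda> j \<and> d \<in> \<Lambda> j \<and> s \<in> T j \<and> s \<noteq> z j"
    unfolding ts osum_carrier_def by auto
  have inb: "\<And>j g s d. s \<in> T j \<Longrightarrow> s \<noteq> z j \<Longrightarrow> OEl j g s d \<in> brandt_block T z j g d"
    unfolding brandt_block_def by auto
  have part: "pseudocompact_space (subtopology \<tau> (brandt_part \<Lambda> T z i))" if i: "i \<in> I" for i
  proof (rule pc_sub[OF pseudo, of OZero])
    show "OZero \<in> brandt_part \<Lambda> T z i" unfolding brandt_part_def by simp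
    show "brandt_part \<Lambda> T z i \<subseteq> topspace \<tau>" unfolding ts brandt_part_def osum_carrier_def using i by auto
    have "brandt_part \<Lambda> T z i - {OZero} = (\<Union>(g,d)\<in>\<Lambda> i \<times> \<Lambda> i. brandt_block T z i g d - {OZero})"
      unfolding brandt_part_def brandt_block_def by auto
    moreover have "openin \<tau> (\<Union>(g,d)\<in>\<Lambda> i \<times> \<Lambda> i. brandt_block T z i g d - {OZero})"
    proof (rule openin_Union, clarify)
      fix g d assume gd: "g \<in> \<Lambda> i" "d \<in> \<Lambda> i"
      show "openin \<tau> (brandt_block T z i g d - {OZero})"
      proof (cases "\<exists>t\<in>T i. t \<noteq> z i")
        case True then show ?thesis using bo i gd by blast
      next
        case False
        hence "brandt_block T z i g d - {OZero} = {}" unfolding brandt_block_def by auto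
        then show ?thesis by (metis openin_empty)
      qed
    qed
    ultimately show "openin \<tau> (brandt_part \<Lambda> T z i - {OZero})" by simp
    show "\<forall>x\<in>topspace \<tau> - brandt_part \<Lambda> T z i. \<exists>W. openin \<tau> W \<and> x \<in> W \<and> W \<inter> (brandt_part \<Lambda> T z i - {OZero}) = {}"
    proof
      fix x assume x: "x \<in> topspace \<tau> - brandt_part \<Lambda> T z i"
      hence "x \<noteq> OZero" unfolding brandt_part_def by blast
      then obtain j g s d where jj: "x = OEl j g s d" "j \<in> I" "g \<in> \<Lambda> j" "d \<in> \<Lambda> j" "s \<in> T j" "s \<noteq> z j"
        using mem x by blast
      have ji: "j \<noteq> i"
      proof
        assume "j = i"
        hence "x \<in> brandt_part \<Lambda> T z i" using jj unfolding brandt_part_def by blast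
        thus False using x by blast
      qed
      have s1: "brandt_block T z j g d - {OZero} \<subseteq> {y. \<exists>s. y = OEl j g s d}" unfolding brandt_block_def by blast
      have s2: "brandt_part \<Lambda> T z i - {OZero} \<subseteq> {y. \<exists>a s b. y = OEl i a s b}" unfolding brandt_part_def by blast
      have "(brandt_block T z j g d - {OZero}) \<inter> (brandt_part \<Lambda> T z i - {OZero}) = {}"
        using s1 s2 ji by blast
      moreover have "x \<in> brandt_block T z j g d - {OZero}" using inb[OF jj(5,6)] jj(1) by simp
      ultimately show "\<exists>W. openin \<tau> W \<and> x \<in> W \<and> W \<inter> (brandt_part \<Lambda> T z i - {OZero}) = {}"
        using bo[OF jj(2-6)] by blast
    qed
  qed
  have block: "pseudocompact_space (subtopology \<tau> (brandt_block T z i a b))"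
    if i: "i \<in> I" and a: "a \<in> \<Lambda> i" and b: "b \<in> \<Lambda> i" for i a b
  proof (rule pc_sub[OF pseudo, of OZero])
    show "OZero \<in> brandt_block T z i a b" unfolding brandt_block_def by simp
    show "brandt_block T z i a b \<subseteq> topspace \<tau>" unfolding ts brandt_block_def osum_carrier_def using i a b by auto
    show "openin \<tau> (brandt_block T z i a b - {OZero})"
    proof (cases "\<exists>t\<in>T i. t \<noteq> z i")
      case True then show ?thesis using bo i a b by blast
    next
      case False
      hence "brandt_block T z i a b - {OZero} = {}" unfolding brandt_block_def by auto
      then show ?thesis by (metis openin_empty)
    qed
    show "\<forall>x\<in>topspace \<tau> - brandt_block T z i a b. \<exists>W. openin \<tau> W \<and> x \<in> W \<and> W \<inter> (brandt_block T z i a b - {OZero}) = {}"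
    proof
      fix x assume x: "x \<in> topspace \<tau> - brandt_block T z i a b"
      hence "x \<noteq> OZero" unfolding brandt_block_def by blast
      then obtain j g s d where jj: "x = OEl j g s d" "j \<in> I" "g \<in> \<Lambda> j" "d \<in> \<Lambda> j" "s \<in> T j" "s \<noteq> z j"
        using mem x by blast
      have ji: "\<not> (j = i \<and> g = a \<and> d = b)"
      proof
        assume "j = i \<and> g = a \<and> d = b"
        hence "x \<in> brandt_block T z i a b" using inb[OF jj(5,6)] jj(1) by simp
        thus False using x by blast
      qed
      have s1: "\<And>g d. brandt_block T z j g d - {OZero} \<subseteq> {y. \<exists>s. y = OEl j g s d}" unfolding brandt_block_def by blast
      have s2: "brandt_block T z i a b - {OZero} \<subseteq> {y. \<exists>s. y = OEl i a s b}" unfolding brandt_block_def by blast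
      have "(brandt_block T z j g d - {OZero}) \<inter> (brandt_block T z i a b - {OZero}) = {}"
        using s1[of g d] s2 ji by blast
      moreover have "x \<in> brandt_block T z j g d - {OZero}" using inb[OF jj(5,6)] jj(1) by simp
      ultimately show "\<exists>W. openin \<tau> W \<and> x \<in> W \<and> W \<inter> (brandt_block T z i a b - {OZero}) = {}"
        using bo[OF jj(2-6)] by blast
    qed
  qed
  show ?thesis using part block by blast
qed

end
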